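(* Let $\mathcal{H}$ be a symmetric and complete hypothesis set of functions $\mathcal{X}\times\overline{\mathcal{Y}}\to\mathbb{R}$, let $c\colon\mathcal{X}\times\mathcal{Y}\to[0,1]$ be any cost function, and let $\Psi(t)=1-t$. Then for all $h\in\mathcal{H}$ and any distribution on $\mathcal{X}\times\mathcal{Y}$, $$\mathcal{E}_{\mathsf{L}_{\mathrm{def}}}(h)-\mathcal{E}^*_{\mathsf{L}_{\mathrm{def}}}(\mathcal{H})+\mathcal{M}_{\mathsf{L}_{\mathrm{def}}}(\mathcal{H})\le (n+1)\big(\mathcal{E}_{\mathsf{L}_{\mathrm{RL2D}}}(h)-\mathcal{E}^*_{\mathsf{L}_{\mathrm{RL2D}}}(\mathcal{H})+\mathcal{M}_{\mathsf{L}_{\mathrm{RL2D}}}(\mathcal{H})\big).$$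
   Context: Learning to defer. $\mathcal{X}$ is an input space, $\mathcal{Y}=[n]$, $\overline{\mathcal{Y}}=\{1,\dots,n+1\}$ with $n+1$ meaning "defer". For $h\colon\mathcal{X}\times\overline{\mathcal{Y}}\to\mathbb{R}$, $\mathsf{h}(x)=\operatorname{argmax}_{y\in\overline{\mathcal{Y}}}h(x,y)$ with a fixed deterministic tie-breaking rule. Given a cost $c\colon\mathcal{X}\times\mathcal{Y}\to[0,1]$, the deferral loss is $\mathsf{L}_{\mathrm{def}}(h,x,y)=1_{\mathsf{h}(x)\neq y}1_{\mathsf{h}(x)\in[n]}+c(x,y)1_{\mathsf{h}(x)=n+1}$, and for $\Psi\colon[0,1]\to\mathbb{R}_+\cup\{+\infty\}$ non-increasing the surrogate is $\mathsf{L}_{\mathrm{RL2D}}(h,x,y)=c(x,y)\Psi\big(\frac{e^{h(x,y)}}{\sum_{y'\in\overline{\mathcal{Y}}}e^{h(x,y')}}\big)+(1-c(x,y))\Psi\big(\frac{e^{h(x,y)}+e^{h(x,n+1)}}{\sum_{y'\in\overline{\mathcal{Y}}}e^{h(x,y')}}\big)$. For a loss $\mathsf{L}$: $\mathcal{E}_{\mathsf{L}}(h)=\mathbb{E}_{(x,y)}[\mathsf{L}(h,x,y)]$, $\mathcal{E}^*_{\mathsf{L}}(\mathcal{H})=\inf_{h\in\mathcal{H}}\mathcal{E}_{\mathsf{L}}(h)$, $\mathcal{M}_{\mathsf{L}}(\mathcal{H})=\mathcal{E}^*_{\mathsf{L}}(\mathcal{H})-\mathbb{E}_x[\inf_{h\in\mathcal{H}}\mathbb{E}_{y\mid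 x}[\mathsf{L}(h,x,y)]]$. $\mathcal{H}$ is symmetric if there is a family $\mathcal{F}$ of functions $\mathcal{X}\to\mathbb{R}$ with $\{[h(x,1),\dots,h(x,n+1)]:h\in\mathcal{H}\}=\{[f_1(x),\dots,f_{n+1}(x)]:f_i\in\mathcal{F}\}$ for every $x$; $\mathcal{H}$ is complete if $\{h(x,y):h\in\mathcal{H}\}=\mathbb{R}$ for every $(x,y)\in\mathcal{X}\times\mathcal{Y}$. *)

theory Defs
  imports "HOL-Probability.Probability"
begin

text \<open>Labels: Y = {1..n}; Ybar = {1..n+1}, where n+1 means defer.
  A hypothesis is h :: 'x => nat => real (only its values on Ybar matter).\<close>

definition Ybar :: "nat \<Rightarrow> nat set" where
  "Ybar n = {1..Suc n}"

definition tie_rule :: "nat \<Rightarrow> (nat set \<Rightarrow> nat) \<Rightarrow> bool" where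
  "tie_rule n sel \<longleftrightarrow> (\<forall>S. S \<subseteq> Ybar n \<and> S \<noteq> {} \<longrightarrow> sel S \<in> S)"

definition hpred :: "(nat set \<Rightarrow> nat) \<Rightarrow> nat \<Rightarrow> ('x \<Rightarrow> nat \<Rightarrow> real) \<Rightarrow> 'x \<Rightarrow> nat" where
  "hpred sel n h x = sel {y \<in> Ybar n. h x y = (MAX y' \<in> Ybar n. h x y')}"

definition L_def :: "(nat set \<Rightarrow> nat) \<Rightarrow> nat \<Rightarrow> ('x \<Rightarrow> nat \<Rightarrow> real) \<Rightarrow>
    ('x \<Rightarrow> nat \<Rightarrow> real) \<Rightarrow> 'x \<Rightarrow> nat \<Rightarrow> real" where
  "L_def sel n c h x y =
     (if hpred sel n h x \<noteq> y \<and> hpred sel n h x \<in> {1..n} then 1 else 0)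
     + c x y * (if hpred sel n h x = Suc n then 1 else 0)"

definition softmax :: "nat \<Rightarrow> ('x \<Rightarrow> nat \<Rightarrow> real) \<Rightarrow> 'x \<Rightarrow> nat \<Rightarrow> real" where
  "softmax n h x y = exp (h x y) / (\<Sum>y'\<in>Ybar n. exp (h x y'))"

definition L_RL2D :: "(real \<Rightarrow> real) \<Rightarrow> nat \<Rightarrow> ('x \<Rightarrow> nat \<Rightarrow> real) \<Rightarrow>
    ('x \<Rightarrow> nat \<Rightarrow> real) \<Rightarrow> 'x \<Rightarrow> nat \<Rightarrow> real" where
  "L_RL2D \<Psi> n c h x y =
     c x y * \<Psi> (softmax n h x y)
     + (1 - c x y) * \<Psi> ((exp (h x y) + exp (h x (Suc n))) / (\<Sum>y'\<in>Ybar n. exp (h x y')))"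

text \<open>A distribution on X x Y is given by its X-marginal M (a probability measure)
  and the conditional distribution p x y = P(Y = y | X = x), y in {1..n}.\<close>

definition cond_risk :: "nat \<Rightarrow> ('x \<Rightarrow> nat \<Rightarrow> real) \<Rightarrow>
    (('x \<Rightarrow> nat \<Rightarrow> real) \<Rightarrow> 'x \<Rightarrow> nat \<Rightarrow> real) \<Rightarrow> ('x \<Rightarrow> nat \<Rightarrow> real) \<Rightarrow> 'x \<Rightarrow> real" where
  "cond_risk n p L h x = (\<Sum>y\<in>{1..n}. p x y * L h x y)"

definition risk :: "'x measure \<Rightarrow> nat \<Rightarrow> ('x \<Rightarrow> nat \<Rightarrow> real) \<Rightarrow>
    (('x \<Rightarrow> nat \<Rightarrow> real) \<Rightarrow> 'x \<Rightarrow> nat \<Rightarrow> real) \<Rightarrow> ('x \<Rightarrow> nat \<Rightarrow> real) \<Rightarrow> real" where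
  "risk M n p L h = (\<integral>x. cond_risk n p L h x \<partial>M)"

definition best_risk :: "'x measure \<Rightarrow> nat \<Rightarrow> ('x \<Rightarrow> nat \<Rightarrow> real) \<Rightarrow>
    (('x \<Rightarrow> nat \<Rightarrow> real) \<Rightarrow> 'x \<Rightarrow> nat \<Rightarrow> real) \<Rightarrow> ('x \<Rightarrow> nat \<Rightarrow> real) set \<Rightarrow> real" where
  "best_risk M n p L H = (INF h\<in>H. risk M n p L h)"

definition min_gap :: "'x measure \<Rightarrow> nat \<Rightarrow> ('x \<Rightarrow> nat \<Rightarrow> real) \<Rightarrow>
    (('x \<Rightarrow> nat \<Rightarrow> real) \<Rightarrow> 'x \<Rightarrow> nat \<Rightarrow> real) \<Rightarrow> ('x \<Rightarrow> nat \<Rightarrow> real) set \<Rightarrow> real" where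
  "min_gap M n p L H = best_risk M n p L H - (\<integral>x. (INF h\<in>H. cond_risk n p L h x) \<partial>M)"

definition symmetric_hyp :: "nat \<Rightarrow> ('x \<Rightarrow> nat \<Rightarrow> real) set \<Rightarrow> bool" where
  "symmetric_hyp n H \<longleftrightarrow> (\<exists>F :: ('x \<Rightarrow> real) set. \<forall>x.
     (\<lambda>h. map (\<lambda>y. h x y) [1..<n+2]) ` H
       = (\<lambda>fs. map (\<lambda>f. f x) fs) ` {fs. length fs = Suc n \<and> set fs \<subseteq> F})"

definition complete_hyp :: "nat \<Rightarrow> ('x \<Rightarrow> nat \<Rightarrow> real) set \<Rightarrow> bool" where
  "complete_hyp n H \<longleftrightarrow> (\<forall>x. \<forall>y\<in>{1..n}. (\<lambda>h. h x y) ` H = UNIV)"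

end

theory Submission
  imports Defs
begin


lemma Ybar_fin: "finite (Ybar n)" by (simp add: Ybar_def)
lemma Ybar_insert: "Ybar n = insert (Suc n) {1..n}" by (auto simp: Ybar_def)
lemma Ybar_card: "card (Ybar n) = Suc n" by (simp add: Ybar_def)
lemma Ybar_ne: "Ybar n \<noteq> {}" by (auto simp: Ybar_def)

lemma argmax_eq:
  "{y \<in> Ybar n. g x y = (MAX y' \<in> Ybar n. g x y')} = {y \<in> Ybar n. \<forall>y'\<in>Ybar n. g x y' \<le> g x y}"
proof -
  have "(MAX y' \<in> Ybar n. g x y') \<in> (\<lambda>y. g x y) ` Ybar n"
    using Max_in[OF finite_imageI[OF Ybar_fin]] Ybar_ne by auto
  have "g x y = (MAX y' \<in> Ybar n. g x y') \<longleftrightarrow> (\<forall>y'\<in>Ybar n. g x y' \<le> g x y)" if "y \<in> Ybar n" for y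
  proof
    assume "g x y = (MAX y' \<in> Ybar n. g x y')"
    then show "\<forall>y'\<in>Ybar n. g x y' \<le> g x y" using Ybar_fin by auto
  next
    assume a: "\<forall>y'\<in>Ybar n. g x y' \<le> g x y"
    have "(MAX y' \<in> Ybar n. g x y') \<le> g x y" using a Ybar_fin Ybar_ne by (simp add: Max_le_iff)
    moreover have "g x y \<le> (MAX y' \<in> Ybar n. g x y')" using that Ybar_fin by simp
    ultimately show "g x y = (MAX y' \<in> Ybar n. g x y')" by simp
  qed
  then show ?thesis by blast
qed

lemma hpred_in:
  assumes "tie_rule n sel"
  shows "hpred sel n g x \<in> Ybar n \<and> (\<forall>y\<in>Ybar n. g x y \<le> g x (hpred sel n g x))"
proof -
  let ?S = "{y \<in> Ybar n. \<forall>y'\<in>Ybar n. g x y' \<le> g x y}"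
  have "(MAX y' \<in> Ybar n. g x y') \<in> (\<lambda>y. g x y) ` Ybar n"
    using Max_in[OF finite_imageI[OF Ybar_fin]] Ybar_ne by auto
  then obtain y0 where y0: "y0 \<in> Ybar n" "g x y0 = (MAX y' \<in> Ybar n. g x y')" by auto
  then have "y0 \<in> ?S" using Ybar_fin by auto
  then have "?S \<noteq> {}" by blast
  moreover have "?S \<subseteq> Ybar n" by auto
  ultimately have "sel ?S \<in> ?S" using assms unfolding tie_rule_def by blast
  then show ?thesis unfolding hpred_def argmax_eq by auto
qed

lemma hpred_unique:
  assumes "tie_rule n sel" "k \<in> Ybar n" "\<forall>y\<in>Ybar n. y \<noteq> k \<longrightarrow> g x y < g x k"
  shows "hpred sel n g x = k"
  using hpred_in[OF assms(1), of g x] assms(2,3) by force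

lemma realize:
  assumes sym: "symmetric_hyp n H" and compl: "complete_hyp n H" and n: "n \<ge> 1"
  shows "\<exists>g\<in>H. \<forall>y\<in>Ybar n. g x y = v y"
proof -
  obtain F where hF: "\<And>x. (\<lambda>h. map (\<lambda>y. h x y) [1..<n+2]) ` H
       = (\<lambda>fs. map (\<lambda>f. f x) fs) ` {fs. length fs = Suc n \<and> set fs \<subseteq> F}"
    using sym unfolding symmetric_hyp_def by blast
  have ex: "\<exists>f\<in>F. f x = r" for r
  proof -
    have "r \<in> (\<lambda>h. h x 1) ` H" using compl n unfolding complete_hyp_def by auto
    then obtain g where g: "g \<in> H" "g x 1 = r" by auto
    then have "map (\<lambda>y. g x y) [1..<n+2] \<in> (\<lambda>fs. map (\<lambda>f. f x) fs) ` {fs. length fs = Suc n \<and> set fs \<subseteq> F}"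
      using hF[of x] by blast
    then obtain fs where fs: "length fs = Suc n" "set fs \<subseteq> F" "map (\<lambda>y. g x y) [1..<n+2] = map (\<lambda>f. f x) fs"
      by auto
    have "map (\<lambda>y. g x y) [1..<n+2] ! 0 = map (\<lambda>f. f x) fs ! 0" using fs(3) by simp
    moreover have "map (\<lambda>y. g x y) [1..<n+2] ! 0 = g x 1" by (simp del: upt_Suc)
    moreover have "map (\<lambda>f. f x) fs ! 0 = (fs ! 0) x" using fs(1) by simp
    ultimately have "g x 1 = (fs ! 0) x" by simp
    moreover have "fs ! 0 \<in> F" using fs(1,2) by (metis nth_mem subsetD zero_less_Suc)
    ultimately show ?thesis using g by metis
  qed
  define fs where "fs = map (\<lambda>y. SOME f. f \<in> F \<and> f x = v y) [1..<n+2]"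
  have sf: "(SOME f. f \<in> F \<and> f x = v y) \<in> F \<and> (SOME f. f \<in> F \<and> f x = v y) x = v y" for y
  proof -
    have "\<exists>f. f \<in> F \<and> f x = v y" using ex[of "v y"] by blast
    then show ?thesis by (rule someI_ex)
  qed
  have "length fs = Suc n" "set fs \<subseteq> F" using sf unfolding fs_def by auto
  then have "map (\<lambda>f. f x) fs \<in> (\<lambda>h. map (\<lambda>y. h x y) [1..<n+2]) ` H" using hF[of x] by blast
  then obtain g where g: "g \<in> H" "map (\<lambda>y. g x y) [1..<n+2] = map (\<lambda>f. f x) fs" by auto
  have "map (\<lambda>f. f x) fs = map v [1..<n+2]" unfolding fs_def using sf by simp
  then have "\<forall>y\<in>set [1..<n+2]. g x y = v y" using g(2) by (simp add: map_eq_conv)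
  moreover have "set [1..<n+2] = Ybar n" by (auto simp: Ybar_def)
  ultimately show ?thesis using g(1) by (metis (no_types, lifting))
qed



definition qv :: "nat \<Rightarrow> ('x \<Rightarrow> nat \<Rightarrow> real) \<Rightarrow> ('x \<Rightarrow> nat \<Rightarrow> real) \<Rightarrow> 'x \<Rightarrow> nat \<Rightarrow> real" where
  "qv n p c x y = (if y = Suc n then (\<Sum>y'\<in>{1..n}. p x y' * (1 - c x y')) else p x y)"

lemma qv_range:
  assumes "\<forall>y\<in>{1..n}. 0 \<le> p x y" "(\<Sum>y\<in>{1..n}. p x y) = 1" "\<forall>y\<in>{1..n}. 0 \<le> c x y \<and> c x y \<le> 1"
    "y \<in> Ybar n"
  shows "0 \<le> qv n p c x y \<and> qv n p c x y \<le> 1"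
proof (cases "y = Suc n")
  case True
  have "(\<Sum>y'\<in>{1..n}. p x y' * (1 - c x y')) \<le> (\<Sum>y'\<in>{1..n}. p x y')"
    by (rule sum_mono) (use assms in \<open>auto intro: mult_left_le\<close>)
  moreover have "0 \<le> (\<Sum>y'\<in>{1..n}. p x y' * (1 - c x y'))"
    by (rule sum_nonneg) (use assms in auto)
  ultimately show ?thesis using True assms(2) by (simp add: qv_def)
next
  case False
  then have y: "y \<in> {1..n}" using assms(4) by (auto simp: Ybar_def)
  have "p x y \<le> (\<Sum>y\<in>{1..n}. p x y)"
    by (rule member_le_sum) (use assms y in auto)
  then show ?thesis using False assms y by (simp add: qv_def)
qed

lemma cond_def_eq:
  assumes sel: "tie_rule n sel" and ps: "(\<Sum>y\<in>{1..n}. p x y) = 1"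
  shows "cond_risk n p (L_def sel n c) g x = 1 - qv n p c x (hpred sel n g x)"
proof -
  let ?k = "hpred sel n g x"
  have k: "?k \<in> Ybar n" using hpred_in[OF sel, where g=g and x=x] by blast
  show ?thesis
  proof (cases "?k = Suc n")
    case True
    have "cond_risk n p (L_def sel n c) g x = (\<Sum>y\<in>{1..n}. p x y * c x y)"
      unfolding cond_risk_def L_def_def using True by (intro sum.cong) auto
    also have "\<dots> = (\<Sum>y\<in>{1..n}. p x y) - (\<Sum>y\<in>{1..n}. p x y * (1 - c x y))"
      by (simp add: sum_subtractf[symmetric] algebra_simps)
    finally show ?thesis using True ps by (simp add: qv_def)
  next
    case False
    then have k1: "?k \<in> {1..n}" using k by (auto simp: Ybar_def)
    have "cond_risk n p (L_def sel n c) g x = (\<Sum>y\<in>{1..n}. p x y - (if y = ?k then p x y else 0))"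
      unfolding cond_risk_def L_def_def using False k1 by (intro sum.cong) auto
    also have "\<dots> = (\<Sum>y\<in>{1..n}. p x y) - p x ?k"
      using k1 by (simp add: sum_subtractf)
    finally show ?thesis using False ps by (simp add: qv_def)
  qed
qed

lemma Z_pos: "0 < (\<Sum>y'\<in>Ybar n. exp ((g :: 'x \<Rightarrow> nat \<Rightarrow> real) x y'))"
  using Ybar_fin Ybar_ne by (simp add: sum_pos)

lemma softmax_sum: "(\<Sum>y\<in>Ybar n. softmax n g x y) = 1"
  unfolding softmax_def using Z_pos[where n=n and g=g and x=x] by (simp add: sum_divide_distrib[symmetric])

lemma softmax_pos: "0 < softmax n g x y"
  unfolding softmax_def using Z_pos[where n=n and g=g and x=x] by simp

lemma cond_RL_eq:
  assumes ps: "(\<Sum>y\<in>{1..n}. p x y) = 1"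
  shows "cond_risk n p (L_RL2D (\<lambda>t. 1 - t) n c) g x
     = 1 - (\<Sum>y\<in>Ybar n. qv n p c x y * softmax n g x y)"
proof -
  let ?s = "softmax n g x"
  have e: "p x y * L_RL2D (\<lambda>t. 1 - t) n c g x y = p x y - p x y * ?s y - ?s (Suc n) * (p x y * (1 - c x y))" for y
  proof -
    define Z where "Z = (\<Sum>y'\<in>Ybar n. exp (g x y'))"
    have "L_RL2D (\<lambda>t. 1 - t) n c g x y = c x y * (1 - ?s y) + (1 - c x y) * (1 - ?s y - ?s (Suc n))"
      unfolding L_RL2D_def softmax_def Z_def[symmetric] by (simp add: add_divide_distrib)
    then show ?thesis by (simp add: ring_distribs)
  qed
  have "cond_risk n p (L_RL2D (\<lambda>t. 1 - t) n c) g x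
     = (\<Sum>y\<in>{1..n}. p x y - p x y * ?s y - ?s (Suc n) * (p x y * (1 - c x y)))"
    unfolding cond_risk_def
    using e by (intro sum.cong refl) simp
  also have "\<dots> = (\<Sum>y\<in>{1..n}. p x y) - (\<Sum>y\<in>{1..n}. p x y * ?s y) - ?s (Suc n) * (\<Sum>y\<in>{1..n}. p x y * (1 - c x y))"
    by (simp add: sum_subtractf sum_distrib_left)
  finally have A: "cond_risk n p (L_RL2D (\<lambda>t. 1 - t) n c) g x = (\<Sum>y\<in>{1..n}. p x y) - (\<Sum>y\<in>{1..n}. p x y * ?s y) - ?s (Suc n) * (\<Sum>y\<in>{1..n}. p x y * (1 - c x y))" .
  have "(\<Sum>y\<in>Ybar n. qv n p c x y * ?s y) = qv n p c x (Suc n) * ?s (Suc n) + (\<Sum>y\<in>{1..n}. qv n p c x y * ?s y)"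
    unfolding Ybar_insert by simp
  also have "(\<Sum>y\<in>{1..n}. qv n p c x y * ?s y) = (\<Sum>y\<in>{1..n}. p x y * ?s y)"
    by (intro sum.cong) (auto simp: qv_def)
  finally show ?thesis using ps A by (simp add: qv_def algebra_simps)
qed

lemma key_ineq:
  fixes q s :: "nat \<Rightarrow> real"
  assumes "finite Y" "k \<in> Y" "\<forall>y\<in>Y. 0 \<le> s y" "(\<Sum>y\<in>Y. s y) = 1" "\<forall>y\<in>Y. q y \<le> m"
    "1 \<le> N * s k" "0 \<le> N"
  shows "m - q k \<le> N * (m - (\<Sum>y\<in>Y. q y * s y))"
proof -
  have "(\<Sum>y\<in>Y. q y * s y) = q k * s k + (\<Sum>y\<in>Y-{k}. q y * s y)"
    using assms(1,2) by (simp add: sum.remove)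
  also have "(\<Sum>y\<in>Y-{k}. q y * s y) \<le> (\<Sum>y\<in>Y-{k}. m * s y)"
    using assms(3,5) by (intro sum_mono mult_right_mono) auto
  also have "(\<Sum>y\<in>Y-{k}. m * s y) = m * (1 - s k)"
    using assms(1,2,4) by (simp add: sum_distrib_left[symmetric] sum_diff1)
  finally have A: "s k * (m - q k) \<le> m - (\<Sum>y\<in>Y. q y * s y)" by (simp add: algebra_simps)
  have "0 \<le> m - q k" using assms(2,5) by auto
  then have "m - q k \<le> N * s k * (m - q k)" using assms(6) by (simp add: mult_le_cancel_right1)
  also have "\<dots> \<le> N * (m - (\<Sum>y\<in>Y. q y * s y))"
  proof -
    have "0 \<le> N" using assms(7) .
    then show ?thesis using mult_left_mono[OF A] by (simp add: mult.assoc)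
  qed
  finally show ?thesis .
qed

lemma softmax_hpred:
  assumes sel: "tie_rule n sel"
  shows "1 \<le> real (Suc n) * softmax n g x (hpred sel n g x)"
proof -
  let ?k = "hpred sel n g x"
  have "\<forall>y\<in>Ybar n. softmax n g x y \<le> softmax n g x ?k"
    using hpred_in[OF sel, where g=g and x=x] Z_pos[where n=n and g=g and x=x] unfolding softmax_def
    by (auto intro!: divide_right_mono)
  then have "(\<Sum>y\<in>Ybar n. softmax n g x y) \<le> (\<Sum>y\<in>Ybar n. softmax n g x ?k)"
    by (intro sum_mono) auto
  then show ?thesis using softmax_sum[of n g x] by (simp add: Ybar_card)
qed



lemma inf_def_eq:
  assumes sel: "tie_rule n sel" and sym: "symmetric_hyp n H" and compl: "complete_hyp n H"
    and n: "n \<ge> 1" and h: "h \<in> H"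
    and pn: "\<forall>y\<in>{1..n}. 0 \<le> p x y" and ps: "(\<Sum>y\<in>{1..n}. p x y) = 1"
    and cr: "\<forall>y\<in>{1..n}. 0 \<le> c x y \<and> c x y \<le> 1"
  shows "(INF g\<in>H. cond_risk n p (L_def sel n c) g x) = 1 - Max (qv n p c x ` Ybar n)"
proof -
  define m where "m = Max (qv n p c x ` Ybar n)"
  have "m \<in> qv n p c x ` Ybar n" unfolding m_def using Ybar_fin Ybar_ne by (intro Max_in) auto
  then obtain ys where ys: "ys \<in> Ybar n" "qv n p c x ys = m" by auto
  have qle: "\<forall>y\<in>Ybar n. qv n p c x y \<le> m" unfolding m_def using Ybar_fin by auto
  have low: "1 - m \<le> cond_risk n p (L_def sel n c) g x" for g
    using cond_def_eq[where p=p and x=x and g=g and c=c, OF sel ps] hpred_in[OF sel, where g=g and x=x] qle by auto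
  obtain g0 where g0: "g0 \<in> H" "\<forall>y\<in>Ybar n. g0 x y = (if y = ys then 1 else 0)"
    using realize[OF sym compl n, where x=x and v="\<lambda>y. if y = ys then 1 else 0"] by blast
  have "hpred sel n g0 x = ys" using ys g0 by (intro hpred_unique[OF sel]) auto
  then have c0: "cond_risk n p (L_def sel n c) g0 x = 1 - m"
    using cond_def_eq[where p=p and x=x and g=g0 and c=c, OF sel ps] ys by simp
  have "(INF g\<in>H. cond_risk n p (L_def sel n c) g x) \<le> 1 - m"
    using c0 g0(1) by (metis bdd_belowI2 cINF_lower low)
  moreover have "1 - m \<le> (INF g\<in>H. cond_risk n p (L_def sel n c) g x)"
    using h low by (intro cINF_greatest) auto
  ultimately show ?thesis unfolding m_def by linarith
qed

lemma inf_RL_eq: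
  assumes sym: "symmetric_hyp n H" and compl: "complete_hyp n H"
    and n: "n \<ge> 1" and h: "h \<in> H"
    and pn: "\<forall>y\<in>{1..n}. 0 \<le> p x y" and ps: "(\<Sum>y\<in>{1..n}. p x y) = 1"
    and cr: "\<forall>y\<in>{1..n}. 0 \<le> c x y \<and> c x y \<le> 1"
  shows "(INF g\<in>H. cond_risk n p (L_RL2D (\<lambda>t. 1 - t) n c) g x) = 1 - Max (qv n p c x ` Ybar n)"
proof -
  define m where "m = Max (qv n p c x ` Ybar n)"
  have "m \<in> qv n p c x ` Ybar n" unfolding m_def using Ybar_fin Ybar_ne by (intro Max_in) auto
  then obtain ys where ys: "ys \<in> Ybar n" "qv n p c x ys = m" by auto
  have qle: "\<forall>y\<in>Ybar n. qv n p c x y \<le> m" unfolding m_def using Ybar_fin by auto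
  have qr: "\<forall>y\<in>Ybar n. 0 \<le> qv n p c x y \<and> qv n p c x y \<le> 1" using qv_range[where p=p and x=x and c=c, OF pn ps cr] by blast
  have low: "1 - m \<le> cond_risk n p (L_RL2D (\<lambda>t. 1 - t) n c) g x" for g
  proof -
    have "(\<Sum>y\<in>Ybar n. qv n p c x y * softmax n g x y) \<le> (\<Sum>y\<in>Ybar n. m * softmax n g x y)"
      using qle softmax_pos[where n=n and g=g and x=x]
      by (intro sum_mono mult_right_mono) (auto intro: less_imp_le)
    also have "\<dots> = m" using softmax_sum[where n=n and g=g and x=x] by (simp add: sum_distrib_left[symmetric])
    finally show ?thesis using cond_RL_eq[where p=p and x=x and g=g and c=c, OF ps] by simp
  qed
  have bdd: "bdd_below ((\<lambda>g. cond_risk n p (L_RL2D (\<lambda>t. 1 - t) n c) g x) ` H)"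
    using low by (intro bdd_belowI2) 
  have up: "(INF g\<in>H. cond_risk n p (L_RL2D (\<lambda>t. 1 - t) n c) g x) \<le> 1 - m + e" if e: "0 < e" for e
  proof -
    define t where "t = ln (2 * real n / e)"
    have et: "exp t = 2 * real n / e" unfolding t_def using n e by simp
    obtain g1 where g1: "g1 \<in> H" "\<forall>y\<in>Ybar n. g1 x y = (if y = ys then t else 0)"
      using realize[OF sym compl n, where x=x and v="\<lambda>y. if y = ys then t else 0"] by blast
    let ?s = "softmax n g1 x"
    define Z where "Z = (\<Sum>y'\<in>Ybar n. exp (g1 x y'))"
    have "exp (g1 x ys) \<le> Z" unfolding Z_def using ys Ybar_fin by (intro member_le_sum) auto
    then have Zge: "2 * real n / e \<le> Z" using g1(2) ys et by simp
    have sle: "?s y \<le> e / (2 * real n)" if "y \<in> Ybar n - {ys}" for y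
    proof -
      have "?s y = 1 / Z" using that g1(2) unfolding softmax_def Z_def by simp
      also have "\<dots> \<le> 1 / (2 * real n / e)"
      proof -
        have a: "0 < 2 * real n / e" using n e by simp
        then have "0 < Z" using Zge by linarith
        then show ?thesis using a Zge by (intro divide_left_mono mult_pos_pos) auto
      qed
      finally show ?thesis by simp
    qed
    have E1: "(\<Sum>y\<in>Ybar n. (m - qv n p c x y) * ?s y) = (\<Sum>y\<in>Ybar n. m * ?s y) - (\<Sum>y\<in>Ybar n. qv n p c x y * ?s y)"
      by (simp only: left_diff_distrib sum_subtractf)
    have E2: "(\<Sum>y\<in>Ybar n. m * ?s y) = m * (\<Sum>y\<in>Ybar n. ?s y)"
      by (simp only: sum_distrib_left)
    have E3: "(\<Sum>y\<in>Ybar n. ?s y) = 1" by (rule softmax_sum)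
    have "m - (\<Sum>y\<in>Ybar n. qv n p c x y * ?s y) = (\<Sum>y\<in>Ybar n. (m - qv n p c x y) * ?s y)"
      by (simp only: E1 E2 E3 mult_1_right)
    also have "\<dots> = (m - qv n p c x ys) * ?s ys + (\<Sum>y\<in>Ybar n - {ys}. (m - qv n p c x y) * ?s y)"
      by (rule sum.remove[OF Ybar_fin ys(1)])
    also have "\<dots> = (\<Sum>y\<in>Ybar n - {ys}. (m - qv n p c x y) * ?s y)" using ys by simp
    also have "\<dots> \<le> (\<Sum>y\<in>Ybar n - {ys}. 1 * (e / (2 * real n)))"
    proof (intro sum_mono mult_mono)
      fix y assume y: "y \<in> Ybar n - {ys}"
      have "qv n p c x ys \<le> 1" "0 \<le> qv n p c x y" using qr ys y by auto
      then show "m - qv n p c x y \<le> 1" using ys by linarith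
      show "?s y \<le> e / (2 * real n)" using sle y .
      show "0 \<le> (1::real)" by simp
      show "0 \<le> ?s y" by (rule less_imp_le[OF softmax_pos])
    qed
    also have "\<dots> = real n * (e / (2 * real n))"
    proof -
      have "card (Ybar n - {ys}) = n" using ys Ybar_fin by (simp add: Ybar_card)
      then show ?thesis by simp
    qed
    also have "\<dots> = e / 2" using n by simp
    also have "\<dots> \<le> e" using e by simp
    finally have "1 - (\<Sum>y\<in>Ybar n. qv n p c x y * ?s y) \<le> 1 - m + e" by linarith
    then have "cond_risk n p (L_RL2D (\<lambda>t. 1 - t) n c) g1 x \<le> 1 - m + e"
      using cond_RL_eq[where p=p and x=x and g=g1 and c=c, OF ps] by simp
    moreover have "(INF g\<in>H. cond_risk n p (L_RL2D (\<lambda>t. 1 - t) n c) g x) \<le> cond_risk n p (L_RL2D (\<lambda>t. 1 - t) n c) g1 x"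
      using g1(1) bdd by (intro cINF_lower)
    ultimately show ?thesis by linarith
  qed
  have "(INF g\<in>H. cond_risk n p (L_RL2D (\<lambda>t. 1 - t) n c) g x) \<le> 1 - m"
    using up by (rule field_le_epsilon)
  moreover have "1 - m \<le> (INF g\<in>H. cond_risk n p (L_RL2D (\<lambda>t. 1 - t) n c) g x)"
    using h low by (intro cINF_greatest) auto
  ultimately show ?thesis unfolding m_def by linarith
qed



lemma hpred_meas:
  assumes hm: "\<forall>y\<in>Ybar n. (\<lambda>x. h x y) \<in> borel_measurable M"
  shows "hpred sel n h \<in> M \<rightarrow>\<^sub>M count_space UNIV"
proof -
  define A where "A x = {y \<in> Ybar n. \<forall>y'\<in>Ybar n. h x y' \<le> h x y}" for x
  have hp: "hpred sel n h x = sel (A x)" for x unfolding hpred_def argmax_eq A_def ..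
  have le: "{x \<in> space M. h x y' \<le> h x y} \<in> sets M" if "y \<in> Ybar n" "y' \<in> Ybar n" for y y'
  proof -
    have [measurable]: "(\<lambda>x. h x y) \<in> borel_measurable M" "(\<lambda>x. h x y') \<in> borel_measurable M"
      using hm that by auto
    show ?thesis by measurable
  qed
  have AS: "{x \<in> space M. A x = S} \<in> sets M" if S: "S \<subseteq> Ybar n" for S
  proof -
    have "{x \<in> space M. A x = S} = {x \<in> space M. \<forall>y\<in>Ybar n. (y \<in> S \<longleftrightarrow> (\<forall>y'\<in>Ybar n. h x y' \<le> h x y))}"
      using S unfolding A_def by auto
    also have "\<dots> \<in> sets M"
    proof (rule sets.sets_Collect_finite_All[OF _ Ybar_fin])
      fix y assume y: "y \<in> Ybar n"
      have all: "{x \<in> space M. \<forall>y'\<in>Ybar n. h x y' \<le> h x y} \<in> sets M"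
        using le y by (intro sets.sets_Collect_finite_All[OF _ Ybar_fin]) auto
      show "{x \<in> space M. (y \<in> S) = (\<forall>y'\<in>Ybar n. h x y' \<le> h x y)} \<in> sets M"
      proof (cases "y \<in> S")
        case True then show ?thesis using all by simp
      next
        case False then show ?thesis using sets.sets_Collect_neg[OF all] by simp
      qed
    qed
    finally show ?thesis .
  qed
  show ?thesis
    unfolding measurable_count_space_eq2_countable
  proof safe
    fix a :: nat
    have "hpred sel n h -` {a} \<inter> space M = (\<Union>S\<in>{S. S \<subseteq> Ybar n \<and> sel S = a}. {x \<in> space M. A x = S})"
      unfolding hp A_def by auto
    also have "\<dots> \<in> sets M"
    proof (rule sets.finite_UN)
      show "finite {S. S \<subseteq> Ybar n \<and> sel S = a}" using Ybar_fin by (rule rev_finite_subset[OF finite_Pow_iff[THEN iffD2]]) auto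
      show "\<And>S. S \<in> {S. S \<subseteq> Ybar n \<and> sel S = a} \<Longrightarrow> {x \<in> space M. A x = S} \<in> sets M" using AS by auto
    qed
    finally show "hpred sel n h -` {a} \<inter> space M \<in> sets M" .
  qed auto
qed

lemma cond_def_meas:
  assumes hm: "\<forall>y\<in>Ybar n. (\<lambda>x. h x y) \<in> borel_measurable M"
    and cm: "\<forall>y\<in>{1..n}. (\<lambda>x. c x y) \<in> borel_measurable M"
    and pm: "\<forall>y\<in>{1..n}. (\<lambda>x. p x y) \<in> borel_measurable M"
  shows "(\<lambda>x. cond_risk n p (L_def sel n c) h x) \<in> borel_measurable M"
  unfolding cond_risk_def
proof (rule borel_measurable_sum)
  fix y assume y: "y \<in> {1..n}"
  have [measurable]: "(\<lambda>x. c x y) \<in> borel_measurable M" "(\<lambda>x. p x y) \<in> borel_measurable M"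
    using cm pm y by auto
  define F where "F k x = (if k \<noteq> y \<and> k \<in> {1..n} then 1 else 0) + c x y * (if k = Suc n then 1 else (0::real))" for k x
  have "(\<lambda>x. F (hpred sel n h x) x) \<in> borel_measurable M"
  proof (rule measurable_compose_countable[OF _ hpred_meas[OF hm]])
    fix k show "(\<lambda>x. F k x) \<in> borel_measurable M" unfolding F_def by measurable
  qed
  moreover have "L_def sel n c h x y = F (hpred sel n h x) x" for x unfolding L_def_def F_def by simp
  ultimately show "(\<lambda>x. p x y * L_def sel n c h x y) \<in> borel_measurable M" by simp
qed

lemma cond_RL_meas:
  assumes hm: "\<forall>y\<in>Ybar n. (\<lambda>x. h x y) \<in> borel_measurable M"
    and cm: "\<forall>y\<in>{1..n}. (\<lambda>x. c x y) \<in> borel_measurable M"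
    and pm: "\<forall>y\<in>{1..n}. (\<lambda>x. p x y) \<in> borel_measurable M"
  shows "(\<lambda>x. cond_risk n p (L_RL2D (\<lambda>t. 1 - t) n c) h x) \<in> borel_measurable M"
  unfolding cond_risk_def
proof (rule borel_measurable_sum)
  fix y assume y: "y \<in> {1..n}"
  have [measurable]: "(\<lambda>x. \<Sum>y'\<in>Ybar n. exp (h x y')) \<in> borel_measurable M"
  proof (rule borel_measurable_sum)
    fix y' assume "y' \<in> Ybar n"
    then have [measurable]: "(\<lambda>x. h x y') \<in> borel_measurable M" using hm by auto
    show "(\<lambda>x. exp (h x y')) \<in> borel_measurable M" by measurable
  qed
  have [measurable]: "(\<lambda>x. c x y) \<in> borel_measurable M" "(\<lambda>x. p x y) \<in> borel_measurable M"
    "(\<lambda>x. h x y) \<in> borel_measurable M" "(\<lambda>x. h x (Suc n)) \<in> borel_measurable M"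
    using cm pm hm y by (auto simp: Ybar_def)
  show "(\<lambda>x. p x y * L_RL2D (\<lambda>t. 1 - t) n c h x y) \<in> borel_measurable M"
    unfolding L_RL2D_def softmax_def by measurable
qed

lemma m_meas:
  assumes cm: "\<forall>y\<in>{1..n}. (\<lambda>x. c x y) \<in> borel_measurable M"
    and pm: "\<forall>y\<in>{1..n}. (\<lambda>x. p x y) \<in> borel_measurable M"
  shows "(\<lambda>x. Max ((\<lambda>y. qv n p c x y) ` Ybar n)) \<in> borel_measurable M"
proof (rule borel_measurable_Max[OF Ybar_fin])
  fix y assume y: "y \<in> Ybar n"
  have s: "(\<lambda>x. \<Sum>y'\<in>{1..n}. p x y' * (1 - c x y')) \<in> borel_measurable M"
  proof (rule borel_measurable_sum)
    fix y' assume "y' \<in> {1..n}"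
    then have [measurable]: "(\<lambda>x. c x y') \<in> borel_measurable M" "(\<lambda>x. p x y') \<in> borel_measurable M"
      using cm pm by auto
    show "(\<lambda>x. p x y' * (1 - c x y')) \<in> borel_measurable M" by measurable
  qed
  show "(\<lambda>x. qv n p c x y) \<in> borel_measurable M"
  proof (cases "y = Suc n")
    case True then show ?thesis using s by (simp add: qv_def)
  next
    case False then have "y \<in> {1..n}" using y by (auto simp: Ybar_def)
    then show ?thesis using False pm by (simp add: qv_def)
  qed
qed



theorem theorem3:
  fixes n :: nat and H :: "('x \<Rightarrow> nat \<Rightarrow> real) set"
    and c :: "'x \<Rightarrow> nat \<Rightarrow> real" and sel :: "nat set \<Rightarrow> nat"
    and M :: "'x measure" and p :: "'x \<Rightarrow> nat \<Rightarrow> real" and h :: "'x \<Rightarrow> nat \<Rightarrow> real"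
  assumes n: "n \<ge> 1"
    and sel: "tie_rule n sel"
    and sym: "symmetric_hyp n H"
    and compl: "complete_hyp n H"
    and H_meas: "\<forall>g\<in>H. \<forall>y\<in>Ybar n. (\<lambda>x. g x y) \<in> borel_measurable M"
    and c_range: "\<forall>x. \<forall>y\<in>{1..n}. 0 \<le> c x y \<and> c x y \<le> 1"
    and c_meas: "\<forall>y\<in>{1..n}. (\<lambda>x. c x y) \<in> borel_measurable M"
    and M: "prob_space M"
    and p_nonneg: "\<forall>x\<in>space M. \<forall>y\<in>{1..n}. 0 \<le> p x y"
    and p_sum: "\<forall>x\<in>space M. (\<Sum>y\<in>{1..n}. p x y) = 1"
    and p_meas: "\<forall>y\<in>{1..n}. (\<lambda>x. p x y) \<in> borel_measurable M"
    and h: "h \<in> H"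
  shows "risk M n p (L_def sel n c) h - best_risk M n p (L_def sel n c) H
           + min_gap M n p (L_def sel n c) H
         \<le> real (n + 1) * (risk M n p (L_RL2D (\<lambda>t. 1 - t) n c) h
           - best_risk M n p (L_RL2D (\<lambda>t. 1 - t) n c) H
           + min_gap M n p (L_RL2D (\<lambda>t. 1 - t) n c) H)"
proof -
  interpret prob_space M by (rule M)
  define m where "m x = Max ((\<lambda>y. qv n p c x y) ` Ybar n)" for x
  define D where "D x = cond_risk n p (L_def sel n c) h x" for x
  define R where "R x = cond_risk n p (L_RL2D (\<lambda>t. 1 - t) n c) h x" for x
  have hm: "\<forall>y\<in>Ybar n. (\<lambda>x. h x y) \<in> borel_measurable M" using H_meas h by blast
  have cr: "\<forall>y\<in>{1..n}. 0 \<le> c x y \<and> c x y \<le> 1" for x using c_range by blast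
  have pn: "\<forall>y\<in>{1..n}. 0 \<le> p x y" if "x \<in> space M" for x using p_nonneg that by blast
  have ps: "(\<Sum>y\<in>{1..n}. p x y) = 1" if "x \<in> space M" for x using p_sum that by blast
  have qr: "0 \<le> qv n p c x y \<and> qv n p c x y \<le> 1" if "x \<in> space M" "y \<in> Ybar n" for x y
    by (rule qv_range[where p=p and x=x and c=c, OF pn[OF that(1)] ps[OF that(1)] cr[of x] that(2)])
  have mq: "m x \<in> qv n p c x ` Ybar n" for x
    unfolding m_def using Ybar_fin Ybar_ne by (intro Max_in) auto
  have mr: "0 \<le> m x \<and> m x \<le> 1" if "x \<in> space M" for x
    using mq[of x] qr[OF that] by auto
  have qle: "qv n p c x y \<le> m x" if "y \<in> Ybar n" for x y
    unfolding m_def using Ybar_fin that by auto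
  have Deq: "D x = 1 - qv n p c x (hpred sel n h x)" if "x \<in> space M" for x
    unfolding D_def by (rule cond_def_eq[where p=p and x=x and c=c and g=h, OF sel ps[OF that]])
  have Req: "R x = 1 - (\<Sum>y\<in>Ybar n. qv n p c x y * softmax n h x y)" if "x \<in> space M" for x
    unfolding R_def by (rule cond_RL_eq[where p=p and x=x and c=c and g=h, OF ps[OF that]])
  have I1: "(INF g\<in>H. cond_risk n p (L_def sel n c) g x) = 1 - m x" if "x \<in> space M" for x
    unfolding m_def by (rule inf_def_eq[where p=p and x=x and c=c, OF sel sym compl n h pn[OF that] ps[OF that] cr[of x]])
  have I2: "(INF g\<in>H. cond_risk n p (L_RL2D (\<lambda>t. 1 - t) n c) g x) = 1 - m x" if "x \<in> space M" for x
    unfolding m_def by (rule inf_RL_eq[where p=p and x=x and c=c, OF sym compl n h pn[OF that] ps[OF that] cr[of x]])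
  have Dm: "D \<in> borel_measurable M" unfolding D_def using cond_def_meas[OF hm c_meas p_meas] .
  have Rm: "R \<in> borel_measurable M" unfolding R_def using cond_RL_meas[OF hm c_meas p_meas] .
  have mm: "m \<in> borel_measurable M" unfolding m_def using m_meas[OF c_meas p_meas] .
  have kY: "hpred sel n h x \<in> Ybar n" for x using hpred_in[OF sel, where g=h and x=x] by blast
  have sq: "0 \<le> (\<Sum>y\<in>Ybar n. qv n p c x y * softmax n h x y) \<and> (\<Sum>y\<in>Ybar n. qv n p c x y * softmax n h x y) \<le> 1"
    if "x \<in> space M" for x
  proof
    show "0 \<le> (\<Sum>y\<in>Ybar n. qv n p c x y * softmax n h x y)"
      using qr[OF that] softmax_pos[where n=n and g=h and x=x] by (intro sum_nonneg mult_nonneg_nonneg) (auto intro: less_imp_le)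
    have "(\<Sum>y\<in>Ybar n. qv n p c x y * softmax n h x y) \<le> (\<Sum>y\<in>Ybar n. 1 * softmax n h x y)"
      using qr[OF that] softmax_pos[where n=n and g=h and x=x] by (intro sum_mono mult_right_mono) (auto intro: less_imp_le)
    then show "(\<Sum>y\<in>Ybar n. qv n p c x y * softmax n h x y) \<le> 1"
      using softmax_sum[where n=n and g=h and x=x] by simp
  qed
  have bD: "norm (D x) \<le> 1" if x: "x \<in> space M" for x
  proof -
    have "0 \<le> qv n p c x (hpred sel n h x) \<and> qv n p c x (hpred sel n h x) \<le> 1" using qr[OF x kY] .
    then show ?thesis unfolding Deq[OF x] real_norm_def by linarith
  qed
  have bR: "norm (R x) \<le> 1" if x: "x \<in> space M" for x
    using sq[OF x] unfolding Req[OF x] real_norm_def by linarith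
  have bI: "norm (1 - m x) \<le> 1" if x: "x \<in> space M" for x
    using mr[OF x] unfolding real_norm_def by linarith
  have iD: "integrable M D"
    by (rule integrable_const_bound[where B=1, OF AE_I2 Dm]) (rule bD)
  have iR: "integrable M R"
    by (rule integrable_const_bound[where B=1, OF AE_I2 Rm]) (rule bR)
  have mm': "(\<lambda>x. 1 - m x) \<in> borel_measurable M" using mm by measurable
  have iI: "integrable M (\<lambda>x. 1 - m x)"
    by (rule integrable_const_bound[where B=1, OF AE_I2 mm']) (rule bI)
  have int1: "(\<integral>x. (INF g\<in>H. cond_risk n p (L_def sel n c) g x) \<partial>M) = (\<integral>x. 1 - m x \<partial>M)"
    by (rule Bochner_Integration.integral_cong[OF refl I1])
  have int2: "(\<integral>x. (INF g\<in>H. cond_risk n p (L_RL2D (\<lambda>t. 1 - t) n c) g x) \<partial>M) = (\<integral>x. 1 - m x \<partial>M)"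
    by (rule Bochner_Integration.integral_cong[OF refl I2])
  have "risk M n p (L_def sel n c) h - best_risk M n p (L_def sel n c) H
           + min_gap M n p (L_def sel n c) H = (\<integral>x. D x \<partial>M) - (\<integral>x. 1 - m x \<partial>M)"
    unfolding min_gap_def risk_def int1 D_def by simp
  also have "\<dots> = (\<integral>x. D x - (1 - m x) \<partial>M)" using iD iI by simp
  also have "\<dots> \<le> (\<integral>x. real (n + 1) * (R x - (1 - m x)) \<partial>M)"
  proof (rule integral_mono)
    show "integrable M (\<lambda>x. D x - (1 - m x))" using iD iI by auto
    show "integrable M (\<lambda>x. real (n + 1) * (R x - (1 - m x)))" using iR iI by auto
    fix x assume x: "x \<in> space M"
    have "m x - qv n p c x (hpred sel n h x) \<le> real (n+1) * (m x - (\<Sum>y\<in>Ybar n. qv n p c x y * softmax n h x y))"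
    proof (rule key_ineq[OF Ybar_fin kY])
      show "\<forall>y\<in>Ybar n. 0 \<le> softmax n h x y" by (simp add: less_imp_le[OF softmax_pos])
      show "(\<Sum>y\<in>Ybar n. softmax n h x y) = 1" by (rule softmax_sum)
      show "\<forall>y\<in>Ybar n. qv n p c x y \<le> m x" using qle by blast
      show "1 \<le> real (n + 1) * softmax n h x (hpred sel n h x)" using softmax_hpred[OF sel] by simp
      show "0 \<le> real (n + 1)" by simp
    qed
    then show "D x - (1 - m x) \<le> real (n + 1) * (R x - (1 - m x))"
      using Deq[OF x] Req[OF x] by simp
  qed
  also have "\<dots> = real (n + 1) * ((\<integral>x. R x \<partial>M) - (\<integral>x. 1 - m x \<partial>M))"
    using iR iI by simp
  also have "\<dots> = real (n + 1) * (risk M n p (L_RL2D (\<lambda>t. 1 - t) n c) h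
           - best_risk M n p (L_RL2D (\<lambda>t. 1 - t) n c) H
           + min_gap M n p (L_RL2D (\<lambda>t. 1 - t) n c) H)"
    unfolding min_gap_def risk_def int2 R_def by simp
  finally show ?thesis .
qed


end
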